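(* Let $q^N$ be probability distributions on $\mathbb{Z}$ satisfying assumptions (1)–(5) below, let $\phi^N(\theta)=\sum_z q^N(z)e^{iz\theta}$ be the characteristic function of $q^N$, and let $L=N^{1/2}$. There are constants $a,b>0$ such that for all $N$ and $|\theta|\le\pi$, $$|\phi^N(\theta)|\le\begin{cases}1-bN\theta^2,&|\theta|\le 4/(2L+1),\\ 1-a,&4/(2L+1)<|\theta|\le\pi.\end{cases}$$ Consequently, for any $\varepsilon\in(0,\pi]$ there is $c>0$ independent of $N$ such that $|\phi^N(\theta)|\le e^{-c}$ whenever $\varepsilon/\sqrt N<|\theta|\le\pi$.
   Context: Assumptions: (1) $q^N(z)=q^N(-z)$; (2) $\sum_z z^2q^N(z)=\sigma_N^2N$ with $\sigma_N\to\sigma\in(0,\infty)$; (3) there is $h>0$ independent of $N$ with $q^N(z)\ge h/\sqrt N$ for $|z|\le N^{1/2}$; (4) $q^N(z)\le C\exp(-c|z|/\sqrt N)$ with $c,C>0$ independent of $N$; (5) $q^N(z)=0$ for $|z|>B\sqrt N\log N$ with $B$ independent of $N$. *)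

theory Defs
  imports "HOL-Analysis.Analysis"
begin

definition char_fun :: "(int \<Rightarrow> real) \<Rightarrow> real \<Rightarrow> complex" where
  "char_fun p \<theta> = (\<Sum>\<^sub>\<infinity>z\<in>UNIV. complex_of_real (p z) * cis (real_of_int z * \<theta>))"

end

theory Submission
  imports Defs
begin


lemma cos_ge_quad0:
  fixes x :: real assumes "x \<ge> 0" shows "cos x \<ge> 1 - x\<^sup>2 / 2"
proof -
  let ?f = "\<lambda>x. cos x - 1 + x\<^sup>2 / 2"
  have "?f x \<ge> ?f 0"
  proof (rule DERIV_nonneg_imp_nondecreasing[OF assms])
    fix u assume u: "0 \<le> u" "u \<le> x"
    show "\<exists>y. (?f has_real_derivative y) (at u) \<and> 0 \<le> y"
      by (rule exI[of _ "u - sin u"]) (auto intro!: derivative_eq_intros simp: sin_x_le_x u)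
  qed
  then show ?thesis by simp
qed

lemma cos_ge_quad: "cos (x::real) \<ge> 1 - x\<^sup>2 / 2"
  using cos_ge_quad0[of x] cos_ge_quad0[of "-x"] by (cases "x \<ge> 0") auto

lemma sin_ge_cubic:
  fixes x :: real assumes "x \<ge> 0" shows "sin x \<ge> x - x^3 / 6"
proof -
  let ?f = "\<lambda>x. sin x - x + x^3 / 6"
  have "?f x \<ge> ?f 0"
  proof (rule DERIV_nonneg_imp_nondecreasing[OF assms])
    fix u assume u: "0 \<le> u" "u \<le> x"
    show "\<exists>y. (?f has_real_derivative y) (at u) \<and> 0 \<le> y"
      by (rule exI[of _ "cos u - 1 + u\<^sup>2 / 2"])
         (use cos_ge_quad[of u] in \<open>auto intro!: derivative_eq_intros simp: power2_eq_square power3_eq_cube\<close>)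
  qed
  then show ?thesis by simp
qed

lemma cos_le_quart0:
  fixes x :: real assumes "x \<ge> 0" shows "cos x \<le> 1 - x\<^sup>2 / 2 + x^4/24"
proof -
  let ?f = "\<lambda>x. 1 - x\<^sup>2 / 2 + x^4/24 - cos x"
  have "?f x \<ge> ?f 0"
  proof (rule DERIV_nonneg_imp_nondecreasing[OF assms])
    fix u assume u: "0 \<le> u" "u \<le> x"
    show "\<exists>y. (?f has_real_derivative y) (at u) \<and> 0 \<le> y"
      by (rule exI[of _ "sin u - u + u^3 / 6"])
         (use sin_ge_cubic[OF u(1)] in \<open>auto intro!: derivative_eq_intros simp: power2_eq_square power3_eq_cube
          eval_nat_numeral\<close>)
  qed
  then show ?thesis by simp
qed

lemma cos_le_quart: "cos (x::real) \<le> 1 - x\<^sup>2 / 2 + x^4/24"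
  using cos_le_quart0[of x] cos_le_quart0[of "-x"] by (cases "x \<ge> 0") auto

lemma one_minus_cos_ge:
  fixes x :: real assumes "x\<^sup>2 \<le> 10" shows "1 - cos x \<ge> x\<^sup>2 / 12"
proof -
  have "x^4 = x\<^sup>2 * x\<^sup>2" by (simp add: eval_nat_numeral)
  also have "\<dots> \<le> 10 * x\<^sup>2" by (rule mult_right_mono[OF assms]) simp
  finally show ?thesis using cos_le_quart[of x] by simp
qed

lemma one_minus_cos_ge2:
  fixes x :: real assumes "x\<^sup>2 \<le> 4" shows "1 - cos x \<ge> x\<^sup>2 / 3"
proof -
  have "x^4 = x\<^sup>2 * x\<^sup>2" by (simp add: eval_nat_numeral)
  also have "\<dots> \<le> 4 * x\<^sup>2" by (rule mult_right_mono[OF assms]) simp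
  finally show ?thesis using cos_le_quart[of x] by simp
qed

lemma sin_half_lower:
  fixes y :: real assumes "0 \<le> y" "y\<^sup>2 \<le> 5/2" shows "sin y \<ge> 7/12 * y"
proof -
  have "y^3 = y\<^sup>2 * y" by (simp add: eval_nat_numeral)
  also have "\<dots> \<le> 5/2 * y" by (rule mult_right_mono) (use assms in auto)
  finally show ?thesis using sin_ge_cubic[OF assms(1)] by simp
qed


lemma sym_sum_step:
  fixes f :: "int \<Rightarrow> real"
  shows "(\<Sum>z\<in>{-int (Suc n)..int (Suc n)}. f z) = f (int n + 1) + f (-int n - 1) + (\<Sum>z\<in>{-int n..int n}. f z)"
proof -
  have e: "{-int (Suc n)..int (Suc n)} = insert (int n + 1) (insert (-int n - 1) {-int n..int n})"
    by auto
  show ?thesis unfolding e by (simp add: sum.insert)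
qed

lemma dirichlet:
  "2 * sin (\<theta>/2) * (\<Sum>z\<in>{-int n..int n}. cos (real_of_int z * \<theta>)) = 2 * sin ((real n + 1/2) * \<theta>)"
proof (induction n)
  case 0 then show ?case by simp
next
  case (Suc n)
  have c1: "cos (real_of_int (-int n - 1) * \<theta>) = cos ((real n + 1) * \<theta>)"
  proof -
    have "real_of_int (-int n - 1) * \<theta> = - ((real n + 1) * \<theta>)" by (simp add: algebra_simps)
    then show ?thesis by (simp only: cos_minus)
  qed
  have c2: "cos (real_of_int (int n + 1) * \<theta>) = cos ((real n + 1) * \<theta>)" by simp
  have a: "(real (Suc n) + 1/2) * \<theta> = (real n + 1) * \<theta> + \<theta>/2" by (simp add: algebra_simps)
  have b: "(real n + 1/2) * \<theta> = (real n + 1) * \<theta> - \<theta>/2" by (simp add: algebra_simps)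
  have "2 * sin (\<theta>/2) * (\<Sum>z\<in>{-int (Suc n)..int (Suc n)}. cos (real_of_int z * \<theta>))
     = 4 * sin (\<theta>/2) * cos ((real n + 1) * \<theta>) + 2 * sin (\<theta>/2) * (\<Sum>z\<in>{-int n..int n}. cos (real_of_int z * \<theta>))"
    unfolding sym_sum_step c1 c2 by (simp only: distrib_left)
  also have "\<dots> = 4 * sin (\<theta>/2) * cos ((real n + 1) * \<theta>) + 2 * sin ((real n + 1)* \<theta> - \<theta>/2)"
    unfolding Suc.IH b ..
  also have "\<dots> = 2 * sin ((real n + 1) * \<theta> + \<theta>/2)"
    unfolding sin_add sin_diff by (simp add: algebra_simps)
  finally show ?case unfolding a .
qed

lemma dirichlet_bound:
  assumes "sin (\<theta>/2) \<noteq> 0"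
  shows "\<bar>\<Sum>z\<in>{-int n..int n}. cos (real_of_int z * \<theta>)\<bar> \<le> 1 / \<bar>sin (\<theta>/2)\<bar>"
proof -
  let ?S = "\<Sum>z\<in>{-int n..int n}. cos (real_of_int z * \<theta>)"
  have "\<bar>sin (\<theta>/2)\<bar> * \<bar>?S\<bar> = \<bar>sin ((real n + 1/2) * \<theta>)\<bar>"
    using arg_cong[OF dirichlet[of \<theta> n], of abs] by (simp add: abs_mult)
  also have "\<dots> \<le> 1" by simp
  finally have le: "\<bar>sin (\<theta>/2)\<bar> * \<bar>?S\<bar> \<le> 1" .
  have s: "0 < \<bar>sin (\<theta>/2)\<bar>" using assms by simp
  show ?thesis unfolding pos_le_divide_eq[OF s] using le by (simp only: mult.commute)
qed

lemma char_fun_real: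
  fixes p :: "int \<Rightarrow> real"
  assumes sum1: "(p has_sum 1) UNIV" and nn: "\<And>z. p z \<ge> 0" and sym: "\<And>z. p z = p (-z)"
  shows "\<exists>c. char_fun p \<theta> = complex_of_real c
     \<and> ((\<lambda>z. p z * (1 - cos (real_of_int z * \<theta>))) has_sum (1 - c)) UNIV
     \<and> ((\<lambda>z. p z * (1 + cos (real_of_int z * \<theta>))) has_sum (1 + c)) UNIV"
proof -
  have sp: "p summable_on UNIV" using sum1 by (auto simp: summable_on_def)
  have ap: "(\<lambda>z. norm (p z)) summable_on UNIV" using sp nn by (simp add: abs_of_nonneg)
  define f where "f z = p z * cos (real_of_int z * \<theta>)" for z
  define g where "g z = p z * sin (real_of_int z * \<theta>)" for z
  have sf: "f summable_on UNIV"
  proof (rule abs_summable_summable, rule summable_on_comparison_test[OF sp])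
    fix z show "norm (f z) \<le> p z"
      unfolding f_def real_norm_def abs_mult abs_of_nonneg[OF nn[of z]] by (rule mult_left_le) (auto simp: nn)
  qed simp
  have sg: "g summable_on UNIV"
  proof (rule abs_summable_summable, rule summable_on_comparison_test[OF sp])
    fix z show "norm (g z) \<le> p z"
      unfolding g_def real_norm_def abs_mult abs_of_nonneg[OF nn[of z]] by (rule mult_left_le) (auto simp: nn)
  qed simp
  define c where "c = infsum f UNIV"
  have hf: "(f has_sum c) UNIV" using sf c_def by simp
  have "infsum g UNIV = infsum (\<lambda>z. g (- z)) UNIV"
    by (rule infsum_reindex_bij_betw[symmetric]) (auto intro!: bij_betwI[of _ _ _ uminus])
  also have "\<dots> = infsum (\<lambda>z. - g z) UNIV"
    by (rule infsum_cong) (simp add: g_def sym[symmetric])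
  also have "\<dots> = - infsum g UNIV" by (rule infsum_uminus)
  finally have g0: "infsum g UNIV = 0" by simp
  have hg: "(g has_sum 0) UNIV" using has_sum_infsum[OF sg] unfolding g0 .
  have "((\<lambda>z. complex_of_real (f z) + \<i> * complex_of_real (g z)) has_sum (complex_of_real c + \<i> * 0)) UNIV"
  proof -
    have hg': "((\<lambda>x. complex_of_real (g x)) has_sum 0) UNIV" using has_sum_of_real[OF hg] by simp
    show ?thesis by (intro has_sum_add has_sum_cmult_right has_sum_of_real hf hg')
  qed
  moreover have "(\<lambda>z. complex_of_real (f z) + \<i> * complex_of_real (g z))
      = (\<lambda>z. complex_of_real (p z) * cis (real_of_int z * \<theta>))"
    by (auto simp: f_def g_def cis.ctr complex_eq_iff)
  ultimately have "char_fun p \<theta> = complex_of_real c"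
    unfolding char_fun_def by (simp add: infsumI)
  moreover have "((\<lambda>z. p z + - f z) has_sum (1 + - c)) UNIV"
    by (intro has_sum_add sum1) (simp add: has_sum_uminus hf)
  moreover have "((\<lambda>z. p z + f z) has_sum (1 + c)) UNIV"
    by (intro has_sum_add sum1 hf)
  ultimately show ?thesis
    by (intro exI[of _ c]) (simp add: f_def algebra_simps)
qed

lemma cmod_bound:
  fixes p :: "int \<Rightarrow> real"
  assumes sum1: "(p has_sum 1) UNIV" and nn: "\<And>z. p z \<ge> 0" and sym: "\<And>z. p z = p (-z)"
    and F1: "finite F1" "t \<le> (\<Sum>z\<in>F1. p z * (1 - cos (real_of_int z * \<theta>)))"
    and F2: "finite F2" "t \<le> (\<Sum>z\<in>F2. p z * (1 + cos (real_of_int z * \<theta>)))"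
  shows "cmod (char_fun p \<theta>) \<le> 1 - t"
proof -
  obtain c where c: "char_fun p \<theta> = complex_of_real c"
     "((\<lambda>z. p z * (1 - cos (real_of_int z * \<theta>))) has_sum (1 - c)) UNIV"
     "((\<lambda>z. p z * (1 + cos (real_of_int z * \<theta>))) has_sum (1 + c)) UNIV"
    using char_fun_real[OF assms(1-3)] by blast
  have "(\<Sum>z\<in>F1. p z * (1 - cos (real_of_int z * \<theta>))) \<le> 1 - c"
    by (rule finite_sum_le_has_sum[OF c(2) F1(1)]) (auto intro!: mult_nonneg_nonneg nn)
  moreover have "(\<Sum>z\<in>F2. p z * (1 + cos (real_of_int z * \<theta>))) \<le> 1 + c"
  proof (intro finite_sum_le_has_sum[OF c(3) F2(1)])
    fix x show "0 \<le> p x * (1 + cos (real_of_int x * \<theta>))"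
    proof -
      have "0 \<le> 1 + cos (real_of_int x * \<theta>)" using cos_ge_minus_one[of "real_of_int x * \<theta>"] by linarith
      then show ?thesis using nn[of x] by simp
    qed
  qed auto
  ultimately have "\<bar>c\<bar> \<le> 1 - t" using F1(2) F2(2) unfolding abs_le_iff by linarith
  moreover have "cmod (char_fun p \<theta>) = \<bar>c\<bar>" unfolding c(1) by (rule norm_of_real)
  ultimately show ?thesis by simp
qed




lemma sum_sq_ge: "(\<Sum>k\<in>{1..M}. (real k)\<^sup>2) \<ge> real M ^ 3 / 3"
proof (induction M)
  case 0 then show ?case by simp
next
  case (Suc M)
  have "real (Suc M) ^ 3 / 3 \<le> real M ^ 3 / 3 + (real (Suc M))\<^sup>2"
    by (simp add: power2_eq_square power3_eq_cube algebra_simps)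
  also have "\<dots> \<le> (\<Sum>k\<in>{1..M}. (real k)\<^sup>2) + (real (Suc M))\<^sup>2" using Suc.IH by simp
  also have "\<dots> = (\<Sum>k\<in>{1..Suc M}. (real k)\<^sup>2)" by simp
  finally show ?case .
qed

lemma sum_lower:
  fixes p w :: "int \<Rightarrow> real"
  assumes "\<And>z. z \<in> F \<Longrightarrow> c \<le> p z" "\<And>z. z \<in> F \<Longrightarrow> 0 \<le> w z"
  shows "c * (\<Sum>z\<in>F. w z) \<le> (\<Sum>z\<in>F. p z * w z)"
  unfolding sum_distrib_left by (rule sum_mono) (use assms in \<open>auto intro: mult_right_mono\<close>)

lemma regime1a:
  fixes p :: "int \<Rightarrow> real"
  assumes L: "L \<ge> 1" and h: "h > 0" and low: "\<And>z. \<bar>real_of_int z\<bar> \<le> L \<Longrightarrow> h / L \<le> p z"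
    and th: "\<bar>\<theta>\<bar> \<le> 4 / (2 * L + 1)"
  shows "\<exists>F. finite F \<and> h / 72 * L\<^sup>2 * \<theta>\<^sup>2 \<le> (\<Sum>z\<in>F. p z * (1 - cos (real_of_int z * \<theta>)))"
proof -
  define M where "M = nat \<lfloor>L\<rfloor>"
  have hML: "real M \<le> L" using L unfolding M_def by linarith
  have hM1: "M \<ge> 1" using L unfolding M_def by linarith
  have hML2: "real M \<ge> L / 2"
  proof (cases "L \<ge> 2")
    case True then show ?thesis unfolding M_def by linarith
  next
    case False then show ?thesis using hM1 by linarith
  qed
  have Lth: "L * \<bar>\<theta>\<bar> \<le> 2"
  proof -
    have "L * \<bar>\<theta>\<bar> \<le> L * (4 / (2 * L + 1))" using th L by (intro mult_left_mono) auto
    also have "\<dots> \<le> 2" using L by (simp add: field_simps)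
    finally show ?thesis .
  qed
  have "h / 72 * L\<^sup>2 * \<theta>\<^sup>2 = (h / L) * (\<theta>\<^sup>2 / 3) * ((L/2)^3 / 3)"
    using L by (simp add: field_simps power2_eq_square power3_eq_cube)
  also have "\<dots> \<le> (h / L) * (\<theta>\<^sup>2 / 3) * (real M ^ 3 / 3)"
    using hML2 L h by (intro mult_left_mono divide_right_mono power_mono) auto
  also have "\<dots> \<le> (h / L) * (\<theta>\<^sup>2 / 3) * (\<Sum>k\<in>{1..M}. (real k)\<^sup>2)"
    using sum_sq_ge[of M] L h by (intro mult_left_mono) auto
  also have "\<dots> = (h / L) * (\<Sum>k\<in>{1..M}. (real k * \<theta>)\<^sup>2 / 3)"
    by (simp add: sum_distrib_left sum_divide_distrib power_mult_distrib mult_ac)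
  also have "\<dots> \<le> (h / L) * (\<Sum>k\<in>{1..M}. 1 - cos (real k * \<theta>))"
  proof (intro mult_left_mono sum_mono one_minus_cos_ge2)
    fix k assume k: "k \<in> {1..M}"
    have "\<bar>real k * \<theta>\<bar> \<le> L * \<bar>\<theta>\<bar>" using k hML by (simp add: abs_mult mult_right_mono)
    then have "\<bar>real k * \<theta>\<bar> \<le> 2" using Lth by linarith
    then show "(real k * \<theta>)\<^sup>2 \<le> 4"
    proof -
      have "\<bar>real k * \<theta>\<bar>^2 \<le> 2^2" by (rule power_mono) (use \<open>\<bar>real k * \<theta>\<bar> \<le> 2\<close> in auto)
      then show ?thesis by simp
    qed
  qed (use h L in auto)
  also have "\<dots> = (h / L) * (\<Sum>z\<in>int ` {1..M}. 1 - cos (real_of_int z * \<theta>))"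
    by (subst sum.reindex) (auto simp: inj_on_def)
  also have "\<dots> \<le> (\<Sum>z\<in>int ` {1..M}. p z * (1 - cos (real_of_int z * \<theta>)))"
  proof (rule sum_lower)
    fix z assume "z \<in> int ` {1..M}"
    then show "h / L \<le> p z" using hML by (intro low) auto
  qed simp
  finally show ?thesis by blast
qed

lemma regime1b:
  fixes p :: "int \<Rightarrow> real"
  assumes L: "L \<ge> 1" and h: "h > 0" and low: "\<And>z. \<bar>real_of_int z\<bar> \<le> L \<Longrightarrow> h / L \<le> p z"
    and th: "\<bar>\<theta>\<bar> \<le> 4 / (2 * L + 1)"
  shows "\<exists>F. finite F \<and> h / 2 \<le> (\<Sum>z\<in>F. p z * (1 + cos (real_of_int z * \<theta>)))"
proof -
  define K where "K = nat \<lfloor>L / 2\<rfloor>"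
  have hKL: "real K \<le> L / 2" using L unfolding K_def by linarith
  have hK1: "real K + 1 \<ge> L / 2" using L unfolding K_def by linarith
  have Lth: "L * \<bar>\<theta>\<bar> \<le> 2"
  proof -
    have "L * \<bar>\<theta>\<bar> \<le> L * (4 / (2 * L + 1))" using th L by (intro mult_left_mono) auto
    also have "\<dots> \<le> 2" using L by (simp add: field_simps)
    finally show ?thesis .
  qed
  have "h / 2 = (h / L) * (L / 2)" using L by simp
  also have "\<dots> \<le> (h / L) * (real K + 1)" using hK1 h L by (intro mult_left_mono) auto
  also have "\<dots> = (h / L) * (\<Sum>k\<in>{0..K}. 1)" by simp
  also have "\<dots> \<le> (h / L) * (\<Sum>k\<in>{0..K}. 1 + cos (real k * \<theta>))"
  proof (intro mult_left_mono sum_mono)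
    fix k assume k: "k \<in> {0..K}"
    have "real k \<le> L / 2" using k hKL by simp
    then have "real k * \<bar>\<theta>\<bar> \<le> L / 2 * \<bar>\<theta>\<bar>" by (rule mult_right_mono) simp
    then have "\<bar>real k * \<theta>\<bar> \<le> L / 2 * \<bar>\<theta>\<bar>" by (simp add: abs_mult)
    then have "\<bar>real k * \<theta>\<bar> \<le> 1" using Lth by linarith
    then have "0 \<le> cos (real k * \<theta>)" using pi_gt3 by (intro cos_ge_zero) auto
    then show "1 \<le> 1 + cos (real k * \<theta>)" by simp
  qed (use h L in auto)
  also have "\<dots> = (h / L) * (\<Sum>z\<in>int ` {0..K}. 1 + cos (real_of_int z * \<theta>))"
    by (subst sum.reindex) (auto simp: inj_on_def)
  also have "\<dots> \<le> (\<Sum>z\<in>int ` {0..K}. p z * (1 + cos (real_of_int z * \<theta>)))"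
  proof (rule sum_lower)
    fix z assume "z \<in> int ` {0..K}"
    then show "h / L \<le> p z" using hKL L by (intro low) auto
  next
    fix z show "0 \<le> 1 + cos (real_of_int z * \<theta>)" using cos_ge_minus_one[of "real_of_int z * \<theta>"] by linarith
  qed
  finally show ?thesis by blast
qed




lemma regime2_large:
  fixes p :: "int \<Rightarrow> real"
  assumes L: "L \<ge> 13" and h: "h > 0" and low: "\<And>z. \<bar>real_of_int z\<bar> \<le> L \<Longrightarrow> h / L \<le> p z"
    and th1: "4 / (2 * L + 1) < \<bar>\<theta>\<bar>" and th2: "\<bar>\<theta>\<bar> \<le> pi"
    and sg: "s = 1 \<or> s = -1"
  shows "\<exists>F. finite F \<and> h / 7 \<le> (\<Sum>z\<in>F. p z * (1 + s * cos (real_of_int z * \<theta>)))"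
proof -
  define n where "n = nat \<lfloor>L\<rfloor>"
  have hnL: "real n \<le> L" using L unfolding n_def by linarith
  have hnL2: "real n \<ge> L - 1" using L unfolding n_def by linarith
  define F where "F = {-int n..int n}"
  define D where "D = (\<Sum>z\<in>F. cos (real_of_int z * \<theta>))"
  have thpos: "\<bar>\<theta>\<bar> > 0" using th1 L by (smt (verit) divide_pos_pos)
  have sinlow: "sin (\<bar>\<theta>\<bar>/2) \<ge> 7/12 * (\<bar>\<theta>\<bar>/2)"
  proof (rule sin_half_lower)
    have "\<bar>\<theta>\<bar>/2 \<le> pi/2" using th2 by simp
    also have "\<dots> \<le> 1.58" using pi_approx by simp
    finally have a: "\<bar>\<theta>\<bar>/2 \<le> 1.58" .
    have b: "(\<bar>\<theta>\<bar>/2)^2 \<le> 1.58^2" by (rule power_mono[OF a]) simp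
    have c: "(1.58::real)^2 \<le> 5/2" by (simp add: power2_eq_square)
    show "(\<bar>\<theta>\<bar>/2)\<^sup>2 \<le> 5/2" by (rule order_trans[OF b c])
  qed simp
  have abssin: "\<bar>sin (\<theta>/2)\<bar> = sin (\<bar>\<theta>\<bar>/2)"
  proof (cases "\<theta> \<ge> 0")
    case True then show ?thesis using sinlow thpos by simp
  next
    case False
    then have "\<theta>/2 = - (\<bar>\<theta>\<bar>/2)" by simp
    then show ?thesis using sinlow thpos by simp
  qed
  have sin_pos: "\<bar>sin (\<theta>/2)\<bar> \<ge> 7/24 * \<bar>\<theta>\<bar>" using sinlow abssin by simp
  have "\<bar>D\<bar> \<le> 1 / \<bar>sin (\<theta>/2)\<bar>" unfolding D_def F_def
    by (rule dirichlet_bound) (use sin_pos thpos in auto)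
  also have "\<dots> \<le> 1 / (7/24 * \<bar>\<theta>\<bar>)" using sin_pos thpos by (intro divide_left_mono) auto
  also have "\<dots> = 24 / 7 * (1 / \<bar>\<theta>\<bar>)" by simp
  also have "\<dots> \<le> 24 / 7 * ((2 * L + 1) / 4)"
  proof (intro mult_left_mono)
    have "1 / \<bar>\<theta>\<bar> < 1 / (4 / (2 * L + 1))" using th1 L thpos by (intro divide_strict_left_mono) (auto intro!: mult_pos_pos divide_pos_pos)
    then show "1 / \<bar>\<theta>\<bar> \<le> (2 * L + 1) / 4" by simp
  qed simp
  finally have "\<bar>D\<bar> \<le> 24 / 7 * ((2 * L + 1) / 4)" .
  moreover have "24 / 7 * ((2 * L + 1) / 4) = (12 * L + 6) / 7" by (simp add: field_simps)
  ultimately have Dle: "\<bar>D\<bar> \<le> (12 * L + 6) / 7" by simp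
  have cardF: "(\<Sum>z\<in>F. (1::real)) = 2 * real n + 1" unfolding F_def by simp
  have "h / 7 = (h / L) * (L / 7)" using L by simp
  also have "\<dots> \<le> (h / L) * (2 * real n + 1 + s * D)"
  proof (intro mult_left_mono)
    have "s * D \<ge> - \<bar>D\<bar>" using sg by auto
    moreover have d7: "7 * \<bar>D\<bar> \<le> 12 * L + 6" using Dle by (simp add: field_simps)
    ultimately have "L \<le> 14 * real n + 7 + 7 * (s * D)" using hnL2 L by linarith
    then show "L / 7 \<le> 2 * real n + 1 + s * D" by (simp add: field_simps)
  qed (use h L in auto)
  also have "\<dots> = (h / L) * (\<Sum>z\<in>F. 1 + s * cos (real_of_int z * \<theta>))"
    unfolding sum.distrib cardF D_def sum_distrib_left ..
  also have "\<dots> \<le> (\<Sum>z\<in>F. p z * (1 + s * cos (real_of_int z * \<theta>)))"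
  proof (rule sum_lower)
    fix z assume "z \<in> F"
    then have "\<bar>real_of_int z\<bar> \<le> real n" unfolding F_def by auto
    then show "h / L \<le> p z" using hnL by (intro low) auto
  next
    fix z show "0 \<le> 1 + s * cos (real_of_int z * \<theta>)"
    proof (cases "s = 1")
      case True
      have "-1 \<le> cos (real_of_int z * \<theta>)" by (rule cos_ge_minus_one)
      then show ?thesis unfolding True by linarith
    next
      case False
      then have s: "s = -1" using sg by simp
      have "cos (real_of_int z * \<theta>) \<le> 1" by (rule cos_le_one)
      then show ?thesis unfolding s by linarith
    qed
  qed
  finally show ?thesis unfolding F_def by blast
qed




lemma regime2_small:
  fixes p :: "int \<Rightarrow> real"
  assumes L: "L \<ge> 1" "L < 13" and h: "h > 0" and low: "\<And>z. \<bar>real_of_int z\<bar> \<le> L \<Longrightarrow> h / L \<le> p z"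
    and th1: "4 / (2 * L + 1) < \<bar>\<theta>\<bar>" and th2: "\<bar>\<theta>\<bar> \<le> pi"
  shows "\<exists>F. finite F \<and> h * 16 / 113724 \<le> (\<Sum>z\<in>F. p z * (1 - cos (real_of_int z * \<theta>)))"
    and "\<exists>F. finite F \<and> h * 16 / 113724 \<le> (\<Sum>z\<in>F. p z * (1 + cos (real_of_int z * \<theta>)))"
proof -
  have hL: "h / 13 \<le> h / L" using L h by (intro divide_left_mono) auto
  have "h / L \<le> p 1" by (rule low) (use L in simp)
  then have p1: "h / 13 \<le> p 1" using hL by linarith
  have "h / L \<le> p 0" by (rule low) (use L in simp)
  then have p0: "h / 13 \<le> p 0" using hL by linarith
  have a: "4 / 27 \<le> \<bar>\<theta>\<bar>"
  proof -
    have "4 / 27 \<le> 4 / (2 * L + 1)" using L by (intro divide_left_mono) auto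
    then show ?thesis using th1 by linarith
  qed
  have b: "(4 / 27)^2 \<le> \<bar>\<theta>\<bar>^2" by (rule power_mono[OF a]) simp
  have "pi \<le> 3.15" using pi_approx(2) by simp
  with th2 have c: "\<bar>\<theta>\<bar> \<le> 3.15" by (rule order_trans)
  have d: "\<bar>\<theta>\<bar>^2 \<le> 3.15^2" by (rule power_mono[OF c]) simp
  have e: "(3.15::real)^2 \<le> 10" by (simp add: power2_eq_square)
  have th2': "\<theta>\<^sup>2 \<le> 10" using order_trans[OF d e] by simp
  have cos1: "\<theta>\<^sup>2 / 12 \<le> 1 - cos \<theta>" by (rule one_minus_cos_ge[OF th2'])
  have "h * 16 / 113724 = (h / 13) * ((4/27)^2 / 12)" by (simp add: power2_eq_square)
  also have "\<dots> \<le> p 1 * (\<theta>\<^sup>2 / 12)"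
    using p1 b h by (intro mult_mono divide_right_mono) auto
  also have "\<dots> \<le> p 1 * (1 - cos \<theta>)"
    using cos1 p1 h by (intro mult_left_mono) auto
  also have "\<dots> = (\<Sum>z\<in>{1}. p z * (1 - cos (real_of_int z * \<theta>)))" by simp
  finally show "\<exists>F. finite F \<and> h * 16 / 113724 \<le> (\<Sum>z\<in>F. p z * (1 - cos (real_of_int z * \<theta>)))"
    by blast
  have "h * 16 / 113724 \<le> (h / 13) * 2" using h by simp
  also have "\<dots> \<le> p 0 * 2" using p0 by simp
  also have "\<dots> = (\<Sum>z\<in>{0}. p z * (1 + cos (real_of_int z * \<theta>)))" by simp
  finally show "\<exists>F. finite F \<and> h * 16 / 113724 \<le> (\<Sum>z\<in>F. p z * (1 + cos (real_of_int z * \<theta>)))"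
    by blast
qed




lemma bound_all:
  fixes p :: "int \<Rightarrow> real"
  assumes sum1: "(p has_sum 1) UNIV" and nn: "\<And>z. p z \<ge> 0" and sym: "\<And>z. p z = p (-z)"
    and L: "L \<ge> 1" and h: "h > 0" and low: "\<And>z. \<bar>real_of_int z\<bar> \<le> L \<Longrightarrow> h / L \<le> p z"
  shows "(\<bar>\<theta>\<bar> \<le> 4 / (2 * L + 1) \<longrightarrow> cmod (char_fun p \<theta>) \<le> 1 - h / 72 * L\<^sup>2 * \<theta>\<^sup>2)
       \<and> (4 / (2 * L + 1) < \<bar>\<theta>\<bar> \<and> \<bar>\<theta>\<bar> \<le> pi \<longrightarrow> cmod (char_fun p \<theta>) \<le> 1 - h * 16 / 113724)"
proof (intro conjI impI)
  assume th: "\<bar>\<theta>\<bar> \<le> 4 / (2 * L + 1)"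
  from regime1a[OF L h low th] obtain F1 where F1c: "finite F1 \<and> h / 72 * L\<^sup>2 * \<theta>\<^sup>2 \<le> (\<Sum>z\<in>F1. p z * (1 - cos (real_of_int z * \<theta>)))" ..
  note F1 = conjunct1[OF F1c] conjunct2[OF F1c]
  from regime1b[OF L h low th] obtain F2 where F2c: "finite F2 \<and> h / 2 \<le> (\<Sum>z\<in>F2. p z * (1 + cos (real_of_int z * \<theta>)))" ..
  note F2 = conjunct1[OF F2c] conjunct2[OF F2c]
  have Lth: "L * \<bar>\<theta>\<bar> \<le> 2"
  proof -
    have "L * \<bar>\<theta>\<bar> \<le> L * (4 / (2 * L + 1))" using th L by (intro mult_left_mono) auto
    also have "\<dots> \<le> 2" using L by (simp add: field_simps)
    finally show ?thesis .
  qed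
  have "(L * \<bar>\<theta>\<bar>)^2 \<le> 2^2" by (rule power_mono[OF Lth]) (use L in simp)
  then have "L\<^sup>2 * \<theta>\<^sup>2 \<le> 4" by (simp add: power_mult_distrib)
  then have "h / 72 * (L\<^sup>2 * \<theta>\<^sup>2) \<le> h / 72 * 4" using h by (intro mult_left_mono) auto
  then have "h / 72 * L\<^sup>2 * \<theta>\<^sup>2 \<le> h / 2" using h by simp
  then have F2': "h / 72 * L\<^sup>2 * \<theta>\<^sup>2 \<le> (\<Sum>z\<in>F2. p z * (1 + cos (real_of_int z * \<theta>)))"
    using F2(2) by linarith
  show "cmod (char_fun p \<theta>) \<le> 1 - h / 72 * L\<^sup>2 * \<theta>\<^sup>2"
    by (rule cmod_bound[OF sum1 nn sym F1 F2(1) F2'])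
next
  assume th: "4 / (2 * L + 1) < \<bar>\<theta>\<bar> \<and> \<bar>\<theta>\<bar> \<le> pi"
  show "cmod (char_fun p \<theta>) \<le> 1 - h * 16 / 113724"
  proof (cases "L < 13")
    case True
    from regime2_small(1)[OF L True h low conjunct1[OF th] conjunct2[OF th]] obtain F1 where
      F1c: "finite F1 \<and> h * 16 / 113724 \<le> (\<Sum>z\<in>F1. p z * (1 - cos (real_of_int z * \<theta>)))" ..
    note F1 = conjunct1[OF F1c] conjunct2[OF F1c]
    from regime2_small(2)[OF L True h low conjunct1[OF th] conjunct2[OF th]] obtain F2 where
      F2c: "finite F2 \<and> h * 16 / 113724 \<le> (\<Sum>z\<in>F2. p z * (1 + cos (real_of_int z * \<theta>)))" ..
    note F2 = conjunct1[OF F2c] conjunct2[OF F2c]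
    show ?thesis by (rule cmod_bound[OF sum1 nn sym F1 F2])
  next
    case False
    then have L13: "L \<ge> 13" by simp
    have low': "\<And>z. \<bar>real_of_int z\<bar> \<le> L \<Longrightarrow> h / L \<le> p z" by (rule low)
    have sm: "(-1::real) = 1 \<or> (-1::real) = -1" by simp
    have sp: "(1::real) = 1 \<or> (1::real) = -1" by simp
    from regime2_large[OF L13 h low' conjunct1[OF th] conjunct2[OF th] sm] obtain F1 where
      F1c: "finite F1 \<and> h / 7 \<le> (\<Sum>z\<in>F1. p z * (1 + (-1) * cos (real_of_int z * \<theta>)))" ..
    note F1 = conjunct1[OF F1c] conjunct2[OF F1c]
    from regime2_large[OF L13 h low' conjunct1[OF th] conjunct2[OF th] sp] obtain F2 where
      F2c: "finite F2 \<and> h / 7 \<le> (\<Sum>z\<in>F2. p z * (1 + 1 * cos (real_of_int z * \<theta>)))" ..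
    note F2 = conjunct1[OF F2c] conjunct2[OF F2c]
    have a: "h * 16 / 113724 \<le> h / 7" using h by simp
    have F1': "h * 16 / 113724 \<le> (\<Sum>z\<in>F1. p z * (1 - cos (real_of_int z * \<theta>)))"
      using F1(2) a by simp
    have F2': "h * 16 / 113724 \<le> (\<Sum>z\<in>F2. p z * (1 + cos (real_of_int z * \<theta>)))"
      using F2(2) a by simp
    show ?thesis by (rule cmod_bound[OF sum1 nn sym F1(1) F1' F2(1) F2'])
  qed
qed





theorem lemma6:
  fixes q :: "nat \<Rightarrow> int \<Rightarrow> real" and \<sigma>N :: "nat \<Rightarrow> real" and \<sigma> :: real and N0 :: nat
  assumes N0: "N0 \<ge> 1"
    and prob_nonneg: "\<And>N z. N \<ge> N0 \<Longrightarrow> q N z \<ge> 0"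
    and prob_sum: "\<And>N. N \<ge> N0 \<Longrightarrow> (q N has_sum 1) UNIV"
    and sym: "\<And>N z. N \<ge> N0 \<Longrightarrow> q N z = q N (- z)"
    and var: "\<And>N. N \<ge> N0 \<Longrightarrow>
               ((\<lambda>z. (real_of_int z)\<^sup>2 * q N z) has_sum (\<sigma>N N)\<^sup>2 * real N) UNIV"
    and var_lim: "\<sigma>N \<longlonglongrightarrow> \<sigma>" and \<sigma>_pos: "0 < \<sigma>"
    and lower: "\<exists>h>0. \<forall>N\<ge>N0. \<forall>z. \<bar>real_of_int z\<bar> \<le> sqrt (real N) \<longrightarrow> q N z \<ge> h / sqrt (real N)"
    and tail: "\<exists>c>0. \<exists>C>0. \<forall>N\<ge>N0. \<forall>z. q N z \<le> C * exp (- c * \<bar>real_of_int z\<bar> / sqrt (real N))"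
    and support: "\<exists>B. \<forall>N\<ge>N0. \<forall>z. \<bar>real_of_int z\<bar> > B * sqrt (real N) * ln (real N) \<longrightarrow> q N z = 0"
  shows "(\<exists>a>0. \<exists>b>0. \<forall>N\<ge>N0. \<forall>\<theta>::real.
            (\<bar>\<theta>\<bar> \<le> 4 / (2 * sqrt (real N) + 1) \<longrightarrow>
               cmod (char_fun (q N) \<theta>) \<le> 1 - b * real N * \<theta>\<^sup>2) \<and>
            (4 / (2 * sqrt (real N) + 1) < \<bar>\<theta>\<bar> \<and> \<bar>\<theta>\<bar> \<le> pi \<longrightarrow>
               cmod (char_fun (q N) \<theta>) \<le> 1 - a))
         \<and> (\<forall>\<epsilon>. 0 < \<epsilon> \<and> \<epsilon> \<le> pi \<longrightarrow>
             (\<exists>c>0. \<forall>N\<ge>N0. \<forall>\<theta>::real. \<epsilon> / sqrt (real N) < \<bar>\<theta>\<bar> \<and> \<bar>\<theta>\<bar> \<le> pi \<longrightarrow>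
                cmod (char_fun (q N) \<theta>) \<le> exp (- c)))"
proof -
  from lower obtain h where hh: "h > 0 \<and> (\<forall>N\<ge>N0. \<forall>z. \<bar>real_of_int z\<bar> \<le> sqrt (real N) \<longrightarrow> q N z \<ge> h / sqrt (real N))" ..
  have h: "h > 0" using hh by simp
  define a where "a = h * 16 / 113724"
  define b where "b = h / 72"
  have apos: "a > 0" using h unfolding a_def by simp
  have bpos: "b > 0" using h unfolding b_def by simp
  have key: "(\<bar>\<theta>\<bar> \<le> 4 / (2 * sqrt (real N) + 1) \<longrightarrow>
               cmod (char_fun (q N) \<theta>) \<le> 1 - b * real N * \<theta>\<^sup>2) \<and>
            (4 / (2 * sqrt (real N) + 1) < \<bar>\<theta>\<bar> \<and> \<bar>\<theta>\<bar> \<le> pi \<longrightarrow>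
               cmod (char_fun (q N) \<theta>) \<le> 1 - a)" if N: "N \<ge> N0" for N \<theta>
  proof -
    have L: "sqrt (real N) \<ge> 1" using N N0 by simp
    from conjunct2[OF hh] N have lowN: "\<forall>z. \<bar>real_of_int z\<bar> \<le> sqrt (real N) \<longrightarrow> h / sqrt (real N) \<le> q N z"
      by simp
    have low: "\<And>z. \<bar>real_of_int z\<bar> \<le> sqrt (real N) \<Longrightarrow> h / sqrt (real N) \<le> q N z"
      using lowN by blast
    have B: "(\<bar>\<theta>\<bar> \<le> 4 / (2 * sqrt (real N) + 1) \<longrightarrow> cmod (char_fun (q N) \<theta>) \<le> 1 - h / 72 * (sqrt (real N))\<^sup>2 * \<theta>\<^sup>2)
       \<and> (4 / (2 * sqrt (real N) + 1) < \<bar>\<theta>\<bar> \<and> \<bar>\<theta>\<bar> \<le> pi \<longrightarrow> cmod (char_fun (q N) \<theta>) \<le> 1 - h * 16 / 113724)"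
      by (rule bound_all[OF prob_sum[OF N] prob_nonneg[OF N] sym[OF N] L h low])
    have e: "h / 72 * (sqrt (real N))\<^sup>2 * \<theta>\<^sup>2 = b * real N * \<theta>\<^sup>2" unfolding b_def by simp
    show ?thesis using B unfolding e a_def .
  qed
  have all: "\<forall>N\<ge>N0. \<forall>\<theta>::real.
            (\<bar>\<theta>\<bar> \<le> 4 / (2 * sqrt (real N) + 1) \<longrightarrow>
               cmod (char_fun (q N) \<theta>) \<le> 1 - b * real N * \<theta>\<^sup>2) \<and>
            (4 / (2 * sqrt (real N) + 1) < \<bar>\<theta>\<bar> \<and> \<bar>\<theta>\<bar> \<le> pi \<longrightarrow>
               cmod (char_fun (q N) \<theta>) \<le> 1 - a)"
  proof (intro allI impI)
    fix N :: nat and \<theta> :: real assume N: "N0 \<le> N"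
    show "(\<bar>\<theta>\<bar> \<le> 4 / (2 * sqrt (real N) + 1) \<longrightarrow>
               cmod (char_fun (q N) \<theta>) \<le> 1 - b * real N * \<theta>\<^sup>2) \<and>
            (4 / (2 * sqrt (real N) + 1) < \<bar>\<theta>\<bar> \<and> \<bar>\<theta>\<bar> \<le> pi \<longrightarrow>
               cmod (char_fun (q N) \<theta>) \<le> 1 - a)" by (rule key[OF N])
  qed
  have P1: "\<exists>a>0. \<exists>b>0. \<forall>N\<ge>N0. \<forall>\<theta>::real.
            (\<bar>\<theta>\<bar> \<le> 4 / (2 * sqrt (real N) + 1) \<longrightarrow>
               cmod (char_fun (q N) \<theta>) \<le> 1 - b * real N * \<theta>\<^sup>2) \<and>
            (4 / (2 * sqrt (real N) + 1) < \<bar>\<theta>\<bar> \<and> \<bar>\<theta>\<bar> \<le> pi \<longrightarrow>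
               cmod (char_fun (q N) \<theta>) \<le> 1 - a)"
    by (intro exI[of _ a] exI[of _ b] conjI apos bpos all)
  have P2: "\<forall>\<epsilon>. 0 < \<epsilon> \<and> \<epsilon> \<le> pi \<longrightarrow>
             (\<exists>c>0. \<forall>N\<ge>N0. \<forall>\<theta>::real. \<epsilon> / sqrt (real N) < \<bar>\<theta>\<bar> \<and> \<bar>\<theta>\<bar> \<le> pi \<longrightarrow>
                cmod (char_fun (q N) \<theta>) \<le> exp (- c))"
  proof (intro allI impI)
    fix \<epsilon> :: real assume eps: "0 < \<epsilon> \<and> \<epsilon> \<le> pi"
    define m where "m = min (min a (b * \<epsilon>\<^sup>2)) (1/2)"
    have mpos: "m > 0" using apos bpos eps unfolding m_def by simp
    have mle: "m \<le> 1/2" "m \<le> a" "m \<le> b * \<epsilon>\<^sup>2" unfolding m_def by auto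
    define c where "c = - ln (1 - m)"
    have cpos: "c > 0" using mpos mle unfolding c_def by simp
    have ec: "exp (- c) = 1 - m" using mle unfolding c_def by simp
    show "\<exists>c>0. \<forall>N\<ge>N0. \<forall>\<theta>::real. \<epsilon> / sqrt (real N) < \<bar>\<theta>\<bar> \<and> \<bar>\<theta>\<bar> \<le> pi \<longrightarrow>
                cmod (char_fun (q N) \<theta>) \<le> exp (- c)"
    proof (intro exI[of _ c] conjI cpos allI impI)
      fix N :: nat and \<theta> :: real
      assume N: "N \<ge> N0" and th: "\<epsilon> / sqrt (real N) < \<bar>\<theta>\<bar> \<and> \<bar>\<theta>\<bar> \<le> pi"
      have sN: "sqrt (real N) \<ge> 1" using N N0 by simp
      show "cmod (char_fun (q N) \<theta>) \<le> exp (- c)"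
      proof (cases "\<bar>\<theta>\<bar> \<le> 4 / (2 * sqrt (real N) + 1)")
        case True
        have c1: "cmod (char_fun (q N) \<theta>) \<le> 1 - b * real N * \<theta>\<^sup>2"
          using key[OF N, of \<theta>] True by blast
        have "\<epsilon> < sqrt (real N) * \<bar>\<theta>\<bar>" using th sN by (simp add: field_simps)
        then have "\<epsilon>^2 \<le> (sqrt (real N) * \<bar>\<theta>\<bar>)^2" using eps by (intro power_mono) auto
        also have "\<dots> = real N * \<theta>\<^sup>2" by (simp add: power_mult_distrib)
        finally have "b * \<epsilon>\<^sup>2 \<le> b * (real N * \<theta>\<^sup>2)" using bpos by (intro mult_left_mono) auto
        then have "m \<le> b * real N * \<theta>\<^sup>2" using mle(3) by (simp add: mult.assoc)
        then show ?thesis using c1 ec by linarith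
      next
        case False
        have c1: "cmod (char_fun (q N) \<theta>) \<le> 1 - a"
          using key[OF N, of \<theta>] False th by auto
        then show ?thesis using mle(2) ec by linarith
      qed
    qed
  qed
  show ?thesis using P1 P2 by (rule conjI)
qed


end
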